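(* Let $d\ge2$, $q\ge2$ even, $\boldsymbol\theta\in\mathbb{R}^d$, and let $\mathbf a_1,\mathbf a_2\in\mathbb{R}^d$ be linearly independent. Then for every symmetric positive definite $d\times d$ matrix $\mathrm Q$, the (constant) vector $\nabla(\nabla^\top\mathrm Q\nabla)^{q/2}\big[(\mathbf a_1^\top(\mathbf x-\boldsymbol\theta))^q(\mathbf a_2^\top(\mathbf x-\boldsymbol\theta))\big]$ is non-zero.
   Context: $\nabla$ is the gradient with respect to $\mathbf x\in\mathbb{R}^d$; $(\nabla^\top\mathrm Q\nabla)^{q/2}$ is the $q/2$-fold application of the second-order differential operator $\nabla^\top\mathrm Q\nabla$. *)

theory Defs
  imports "HOL-Analysis.Analysis"
begin

definition partial :: "'n::finite \<Rightarrow> (real^'n \<Rightarrow> real) \<Rightarrow> real^'n \<Rightarrow> real" where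
  "partial i f x = deriv (\<lambda>t. f (x + t *\<^sub>R axis i 1)) 0"

definition grad :: "(real^'n::finite \<Rightarrow> real) \<Rightarrow> real^'n \<Rightarrow> real^'n" where
  "grad f x = (\<chi> i. partial i f x)"

definition quad_op :: "real^'n::finite^'n \<Rightarrow> (real^'n \<Rightarrow> real) \<Rightarrow> real^'n \<Rightarrow> real" where
  "quad_op Q f x = (\<Sum>i\<in>UNIV. \<Sum>j\<in>UNIV. Q$i$j * partial i (partial j f) x)"

definition sym_posdef :: "real^'n::finite^'n \<Rightarrow> bool" where
  "sym_posdef Q \<longleftrightarrow> transpose Q = Q \<and> (\<forall>x. x \<noteq> 0 \<longrightarrow> x \<bullet> (Q *v x) > 0)"

end

theory Submission
  imports Defs
begin

fun ev :: "(real \<times> nat \<times> nat) list \<Rightarrow> real \<Rightarrow> real \<Rightarrow> real" where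
  "ev [] u w = 0"
| "ev ((c,k,l)#xs) u w = c * u^k * w^l + ev xs u w"

definition du :: "(real \<times> nat \<times> nat) list \<Rightarrow> (real \<times> nat \<times> nat) list" where
  "du xs = map (\<lambda>(c,k,l). (c * real k, k - 1, l)) xs"
definition dw :: "(real \<times> nat \<times> nat) list \<Rightarrow> (real \<times> nat \<times> nat) list" where
  "dw xs = map (\<lambda>(c,k,l). (c * real l, k, l - 1)) xs"
definition sc :: "real \<Rightarrow> (real \<times> nat \<times> nat) list \<Rightarrow> (real \<times> nat \<times> nat) list" where
  "sc a xs = map (\<lambda>(c,k,l). (a * c, k, l)) xs"

definition Dop :: "real \<Rightarrow> real \<Rightarrow> real \<Rightarrow> real \<Rightarrow> (real \<times> nat \<times> nat) list \<Rightarrow> (real \<times> nat \<times> nat) list" where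
  "Dop al b1 b2 ga xs = sc al (du (du xs)) @ sc b1 (du (dw xs)) @ sc b2 (dw (du xs)) @ sc ga (dw (dw xs))"

lemma ev_append[simp]: "ev (xs @ ys) u w = ev xs u w + ev ys u w"
  by (induction xs) auto

lemma ev_sc[simp]: "ev (sc a xs) u w = a * ev xs u w"
  unfolding sc_def by (induction xs) (auto simp: algebra_simps)

lemma du_append[simp]: "du (xs @ ys) = du xs @ du ys" by (simp add: du_def)
lemma dw_append[simp]: "dw (xs @ ys) = dw xs @ dw ys" by (simp add: dw_def)
lemma du_sc[simp]: "du (sc a xs) = sc a (du xs)"
  by (induction xs) (auto simp: du_def sc_def)
lemma dw_sc[simp]: "dw (sc a xs) = sc a (dw xs)"
  by (induction xs) (auto simp: dw_def sc_def)
lemma dw_du: "dw (du xs) = du (dw xs)"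
  by (induction xs) (auto simp: du_def dw_def)

lemma dw_Dop: "dw (Dop al b1 b2 ga xs) = Dop al b1 b2 ga (dw xs)"
  by (simp add: Dop_def dw_du)

lemma dw_Dop_pow: "dw ((Dop al b1 b2 ga ^^ m) xs) = (Dop al b1 b2 ga ^^ m) (dw xs)"
  by (induction m) (auto simp: dw_Dop)

lemma ev_deriv:
  "((\<lambda>t. ev xs (u + t * a) (w + t * b)) has_real_derivative
      (a * ev (du xs) u w + b * ev (dw xs) u w)) (at 0)"
proof (induction xs)
  case Nil
  then show ?case by (simp add: du_def dw_def)
next
  case (Cons e xs)
  obtain c k l where e: "e = (c,k,l)" by (cases e) auto
  have m: "((\<lambda>t. c * (u + t * a)^k * (w + t * b)^l) has_real_derivative
       (a * (c * real k * u^(k-1) * w^l) + b * (c * real l * u^k * w^(l-1)))) (at 0)"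
    by (rule derivative_eq_intros refl | simp)+
  show ?case using DERIV_add[OF m Cons] by (simp add: e du_def dw_def algebra_simps)
qed


definition F :: "real^'n::finite \<Rightarrow> real^'n \<Rightarrow> real^'n \<Rightarrow> (real \<times> nat \<times> nat) list \<Rightarrow> real^'n \<Rightarrow> real" where
  "F a b th xs x = ev xs (a \<bullet> (x - th)) (b \<bullet> (x - th))"

lemma partial_F: "partial i (F a b th xs) = F a b th (sc (a$i) (du xs) @ sc (b$i) (dw xs))"
proof
  fix x
  have e: "\<And>c::real^_. c \<bullet> (x + t *\<^sub>R axis i 1 - th) = c \<bullet> (x - th) + t * c$i" for t
    by (simp add: inner_diff_right inner_add_right inner_axis algebra_simps)
  show "partial i (F a b th xs) x = F a b th (sc (a$i) (du xs) @ sc (b$i) (dw xs)) x"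
    unfolding partial_def F_def e
    by (rule DERIV_imp_deriv[OF ev_deriv, THEN trans]) (simp add: algebra_simps)
qed

lemma quad_op_F:
  "quad_op Q (F a b th xs) = F a b th (Dop (\<Sum>i\<in>UNIV. \<Sum>j\<in>UNIV. Q$i$j * a$i * a$j)
     (\<Sum>i\<in>UNIV. \<Sum>j\<in>UNIV. Q$i$j * a$i * b$j) (\<Sum>i\<in>UNIV. \<Sum>j\<in>UNIV. Q$i$j * b$i * a$j)
     (\<Sum>i\<in>UNIV. \<Sum>j\<in>UNIV. Q$i$j * b$i * b$j) xs)"
proof
  fix x
  show "quad_op Q (F a b th xs) x = F a b th (Dop (\<Sum>i\<in>UNIV. \<Sum>j\<in>UNIV. Q$i$j * a$i * a$j)
     (\<Sum>i\<in>UNIV. \<Sum>j\<in>UNIV. Q$i$j * a$i * b$j) (\<Sum>i\<in>UNIV. \<Sum>j\<in>UNIV. Q$i$j * b$i * a$j)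
     (\<Sum>i\<in>UNIV. \<Sum>j\<in>UNIV. Q$i$j * b$i * b$j) xs) x"
    unfolding quad_op_def partial_F
    by (simp add: F_def Dop_def dw_du algebra_simps sum.distrib sum_distrib_left sum_distrib_right)
qed


definition deg_ok :: "nat \<Rightarrow> (real \<times> nat \<times> nat) list \<Rightarrow> bool" where
  "deg_ok n xs \<longleftrightarrow> (\<forall>(c,k,l)\<in>set xs. c = 0 \<or> k + l = n)"

lemma deg_ok_du: "deg_ok (Suc n) xs \<Longrightarrow> deg_ok n (du xs)"
  unfolding deg_ok_def du_def by fastforce
lemma deg_ok_dw: "deg_ok (Suc n) xs \<Longrightarrow> deg_ok n (dw xs)"
  unfolding deg_ok_def dw_def by fastforce
lemma deg_ok_sc: "deg_ok n xs \<Longrightarrow> deg_ok n (sc a xs)"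
  unfolding deg_ok_def sc_def by fastforce
lemma deg_ok_append: "deg_ok n xs \<Longrightarrow> deg_ok n ys \<Longrightarrow> deg_ok n (xs @ ys)"
  unfolding deg_ok_def by auto
lemma deg_ok_Dop: "deg_ok (Suc (Suc n)) xs \<Longrightarrow> deg_ok n (Dop al b1 b2 ga xs)"
  unfolding Dop_def by (intro deg_ok_append deg_ok_sc deg_ok_du deg_ok_dw)
lemma deg_ok_Dop_pow: "deg_ok (n + 2 * j) xs \<Longrightarrow> deg_ok n ((Dop al b1 b2 ga ^^ j) xs)"
proof (induction j arbitrary: xs)
  case 0 then show ?case by simp
next
  case (Suc j)
  have "deg_ok (n + 2 * j) (Dop al b1 b2 ga xs)"
    using Suc.prems by (intro deg_ok_Dop) (simp add: algebra_simps)
  then show ?case using Suc.IH by (simp add: funpow_Suc_right del: funpow.simps)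
qed

lemma deg_ok_0_const: "deg_ok 0 xs \<Longrightarrow> ev xs u w = ev xs 0 0"
  unfolding deg_ok_def by (induction xs) auto

lemma ev_cong_du:
  assumes "\<And>u w. ev xs u w = ev ys u w"
  shows "ev (du xs) u w = ev (du ys) u w"
proof -
  have "((\<lambda>t. ev xs (u + t * 1) (w + t * 0)) has_real_derivative (1 * ev (du xs) u w + 0 * ev (dw xs) u w)) (at 0)"
    by (rule ev_deriv)
  moreover have "((\<lambda>t. ev xs (u + t * 1) (w + t * 0)) has_real_derivative (1 * ev (du ys) u w + 0 * ev (dw ys) u w)) (at 0)"
    using ev_deriv[of ys u 1 w 0] by (simp add: assms)
  ultimately show ?thesis using DERIV_unique by fastforce
qed

lemma ev_cong_dw:
  assumes "\<And>u w. ev xs u w = ev ys u w"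
  shows "ev (dw xs) u w = ev (dw ys) u w"
proof -
  have "((\<lambda>t. ev xs (u + t * 0) (w + t * 1)) has_real_derivative (0 * ev (du xs) u w + 1 * ev (dw xs) u w)) (at 0)"
    by (rule ev_deriv)
  moreover have "((\<lambda>t. ev xs (u + t * 0) (w + t * 1)) has_real_derivative (0 * ev (du ys) u w + 1 * ev (dw ys) u w)) (at 0)"
    using ev_deriv[of ys u 0 w 1] by (simp add: assms)
  ultimately show ?thesis using DERIV_unique by fastforce
qed

lemma ev_cong_Dop:
  assumes "\<And>u w. ev xs u w = ev ys u w"
  shows "ev (Dop al b1 b2 ga xs) u w = ev (Dop al b1 b2 ga ys) u w"
proof -
  have 1: "\<And>u w. ev (du xs) u w = ev (du ys) u w"
    by (rule ev_cong_du[OF assms])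
  have 2: "\<And>u w. ev (dw xs) u w = ev (dw ys) u w"
    by (rule ev_cong_dw[OF assms])
  show ?thesis unfolding Dop_def
    by (simp only: ev_append ev_sc ev_cong_du[OF 1] ev_cong_dw[OF 1] ev_cong_du[OF 2] ev_cong_dw[OF 2])
qed

lemma ev_cong_Dop_pow:
  assumes "\<And>u w. ev xs u w = ev ys u w"
  shows "ev ((Dop al b1 b2 ga ^^ j) xs) u w = ev ((Dop al b1 b2 ga ^^ j) ys) u w"
proof (induction j arbitrary: u w)
  case 0 then show ?case by (simp add: assms)
next
  case (Suc j)
  have "\<And>u w. ev ((Dop al b1 b2 ga ^^ j) xs) u w = ev ((Dop al b1 b2 ga ^^ j) ys) u w"
    by (rule Suc.IH)
  then show ?case by (simp only: funpow.simps o_apply) (rule ev_cong_Dop)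
qed

definition l0 :: "(real \<times> nat \<times> nat) list \<Rightarrow> bool" where
  "l0 xs \<longleftrightarrow> (\<forall>(c,k,l)\<in>set xs. l = 0)"

definition S :: "real \<Rightarrow> (real \<times> nat \<times> nat) list \<Rightarrow> (real \<times> nat \<times> nat) list" where
  "S al xs = sc al (du (du xs))"

lemma ev_zero_coeffs: "(\<forall>(c,k,l)\<in>set xs. c = 0) \<Longrightarrow> ev xs u w = 0"
  by (induction xs) auto

lemma l0_S: "l0 xs \<Longrightarrow> l0 (S al xs)"
  unfolding l0_def S_def sc_def du_def by auto

lemma ev_Dop_l0: "l0 xs \<Longrightarrow> ev (Dop al b1 b2 ga xs) u w = ev (S al xs) u w"
proof -
  assume h: "l0 xs"
  have "ev (dw ys) u w = 0" if "l0 ys" for ys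
    using that unfolding l0_def dw_def by (intro ev_zero_coeffs) auto
  moreover have "l0 (du xs)" using h unfolding l0_def du_def by auto
  moreover have "ev (du (dw xs)) u w = 0"
    using h unfolding l0_def dw_def du_def by (intro ev_zero_coeffs) auto
  moreover have "ev (dw (dw xs)) u w = 0"
    using h unfolding l0_def dw_def by (intro ev_zero_coeffs) auto
  ultimately show ?thesis using h unfolding Dop_def S_def by (simp add: dw_du)
qed

lemma ev_Dop_pow_l0: "l0 xs \<Longrightarrow> ev ((Dop al b1 b2 ga ^^ j) xs) u w = ev ((S al ^^ j) xs) u w"
proof (induction j arbitrary: xs)
  case 0 then show ?case by simp
next
  case (Suc j)
  have "ev ((Dop al b1 b2 ga ^^ j) (Dop al b1 b2 ga xs)) u w = ev ((Dop al b1 b2 ga ^^ j) (S al xs)) u w"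
    by (rule ev_cong_Dop_pow) (rule ev_Dop_l0[OF Suc.prems])
  also have "\<dots> = ev ((S al ^^ j) (S al xs)) u w"
    by (rule Suc.IH[OF l0_S[OF Suc.prems]])
  finally show ?case by (simp add: funpow_Suc_right del: funpow.simps)
qed

lemma S_one: "S al [(c, Suc (Suc n), 0)] = [(al * (c * real (Suc (Suc n)) * real (Suc n)), n, 0)]"
  by (simp add: S_def sc_def du_def)

lemma S_pow: "(S al ^^ j) [(c, k + 2 * j, 0)] = [(al ^ j * c * (fact (k + 2 * j) / fact k), k, 0)]"
proof (induction j arbitrary: c)
  case 0 then show ?case by simp
next
  case (Suc j)
  have e: "k + 2 * Suc j = Suc (Suc (k + 2 * j))" by simp
  have f: "(fact (Suc (Suc (k + 2 * j))) :: real) = real (Suc (Suc (k + 2 * j))) * real (Suc (k + 2 * j)) * fact (k + 2 * j)"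
    by (simp only: fact_Suc)
  have "(S al ^^ Suc j) [(c, k + 2 * Suc j, 0)] = (S al ^^ j) (S al [(c, Suc (Suc (k + 2 * j)), 0)])"
    by (simp only: funpow_Suc_right e o_apply)
  also have "\<dots> = (S al ^^ j) [(al * (c * real (Suc (Suc (k + 2 * j))) * real (Suc (k + 2 * j))), k + 2 * j, 0)]"
    by (simp only: S_one)
  also have "\<dots> = [(al ^ j * (al * (c * real (Suc (Suc (k + 2 * j))) * real (Suc (k + 2 * j)))) * (fact (k + 2 * j) / fact k), k, 0)]"
    by (rule Suc.IH)
  also have "\<dots> = [(al ^ Suc j * c * (fact (k + 2 * Suc j) / fact k), k, 0)]"
    by (simp only: e f power_Suc) (simp add: field_simps)
  finally show ?case .
qed


lemma quad_op_pow_F: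
  "(quad_op Q ^^ m) (F a b th xs) = F a b th ((Dop (\<Sum>i\<in>UNIV. \<Sum>j\<in>UNIV. Q$i$j * a$i * a$j)
     (\<Sum>i\<in>UNIV. \<Sum>j\<in>UNIV. Q$i$j * a$i * b$j) (\<Sum>i\<in>UNIV. \<Sum>j\<in>UNIV. Q$i$j * b$i * a$j)
     (\<Sum>i\<in>UNIV. \<Sum>j\<in>UNIV. Q$i$j * b$i * b$j) ^^ m) xs)"
  by (induction m) (simp_all add: quad_op_F)

lemma grad_F: "grad (F a b th xs) x = ev (du xs) (a \<bullet> (x - th)) (b \<bullet> (x - th)) *\<^sub>R a
   + ev (dw xs) (a \<bullet> (x - th)) (b \<bullet> (x - th)) *\<^sub>R b"
  unfolding grad_def partial_F by (simp add: F_def vec_eq_iff algebra_simps)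

lemma quadform_pos:
  assumes "sym_posdef Q" "a \<noteq> 0"
  shows "(\<Sum>i\<in>UNIV. \<Sum>j\<in>UNIV. Q$i$j * a$i * a$j) > 0"
proof -
  have "a \<bullet> (Q *v a) > 0" using assms unfolding sym_posdef_def by blast
  moreover have "a \<bullet> (Q *v a) = (\<Sum>i\<in>UNIV. \<Sum>j\<in>UNIV. Q$i$j * a$i * a$j)"
    by (simp add: inner_vec_def matrix_vector_mult_def sum_distrib_left algebra_simps)
  ultimately show ?thesis by simp
qed

lemma indep2:
  fixes a1 a2 :: "real^'n::finite"
  assumes "independent {a1, a2}" "a1 \<noteq> a2" "c2 \<noteq> 0"
  shows "c1 *\<^sub>R a1 + c2 *\<^sub>R a2 \<noteq> 0"
proof
  assume h: "c1 *\<^sub>R a1 + c2 *\<^sub>R a2 = 0"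
  have "a2 = (- c1 / c2) *\<^sub>R a1"
  proof -
    have "c2 *\<^sub>R a2 = - c1 *\<^sub>R a1" using h by (simp add: add_eq_0_iff)
    then have "(1/c2) *\<^sub>R (c2 *\<^sub>R a2) = (1/c2) *\<^sub>R (- c1 *\<^sub>R a1)" by simp
    then show ?thesis using assms(3) by (simp add: divide_inverse mult.commute)
  qed
  then have "a2 \<in> span ({a1, a2} - {a2})"
    using assms(2) by (simp add: span_neg span_mul span_base insert_Diff_if)
  then have "dependent {a1, a2}" unfolding dependent_def by blast
  then show False using assms(1) by blast
qed

theorem lemmaD2:
  fixes q :: nat and \<theta> a1 a2 :: "real^'n::finite" and Q :: "real^'n^'n"
  assumes "CARD('n) \<ge> 2"
    and "q \<ge> 2" and "even q"
    and "independent {a1, a2}" and "a1 \<noteq> a2"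
    and "sym_posdef Q"
  shows "\<exists>v. v \<noteq> 0 \<and> (\<forall>x. grad (((quad_op Q) ^^ (q div 2))
            (\<lambda>x. (a1 \<bullet> (x - \<theta>)) ^ q * (a2 \<bullet> (x - \<theta>)))) x = v)"
proof -
  define m where "m = q div 2"
  have q: "q = 2 * m" using assms(3) m_def by simp
  define al where "al = (\<Sum>i\<in>UNIV. \<Sum>j\<in>UNIV. Q$i$j * a1$i * a1$j)"
  define b1 where "b1 = (\<Sum>i\<in>UNIV. \<Sum>j\<in>UNIV. Q$i$j * a1$i * a2$j)"
  define b2 where "b2 = (\<Sum>i\<in>UNIV. \<Sum>j\<in>UNIV. Q$i$j * a2$i * a1$j)"
  define ga where "ga = (\<Sum>i\<in>UNIV. \<Sum>j\<in>UNIV. Q$i$j * a2$i * a2$j)"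
  define ys where "ys = (Dop al b1 b2 ga ^^ m) [(1, q, 1)]"
  have f: "(\<lambda>x. (a1 \<bullet> (x - \<theta>)) ^ q * (a2 \<bullet> (x - \<theta>))) = F a1 a2 \<theta> [(1, q, 1)]"
    by (simp add: F_def fun_eq_iff)
  have a10: "a1 \<noteq> 0" using assms(4) dependent_zero by blast
  have alpos: "al > 0" unfolding al_def using quadform_pos[OF assms(6) a10] .
  have dg: "deg_ok 1 ys" unfolding ys_def
    by (rule deg_ok_Dop_pow) (simp add: deg_ok_def q)
  have c1: "ev (du ys) u w = ev (du ys) 0 0" for u w
    using deg_ok_0_const[of "du ys"] deg_ok_du[of 0 ys] dg by (simp del: ev.simps)
  have c2: "ev (dw ys) u w = ev (dw ys) 0 0" for u w
    using deg_ok_0_const[of "dw ys"] deg_ok_dw[of 0 ys] dg by (simp del: ev.simps)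
  have "dw [(1, q, 1)] = [(1, 0 + 2 * m, 0)]" by (simp add: dw_def q)
  then have "ev (dw ys) 0 0 = ev ((Dop al b1 b2 ga ^^ m) [(1, 0 + 2 * m, 0)]) 0 0"
    unfolding ys_def dw_Dop_pow by simp
  also have "\<dots> = ev ((S al ^^ m) [(1, 0 + 2 * m, 0)]) 0 0"
    by (rule ev_Dop_pow_l0) (simp add: l0_def)
  also have "\<dots> = al ^ m * fact (2 * m)"
    by (simp only: S_pow) simp
  finally have v2: "ev (dw ys) 0 0 = al ^ m * fact (2 * m)" .
  have v2nz: "ev (dw ys) 0 0 \<noteq> 0" using v2 alpos by simp
  have ysF: "(quad_op Q ^^ m) (F a1 a2 \<theta> [(1,q,1)]) = F a1 a2 \<theta> ys"
    unfolding ys_def al_def b1_def b2_def ga_def by (rule quad_op_pow_F)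
  have g: "(quad_op Q ^^ (q div 2)) (\<lambda>x. (a1 \<bullet> (x - \<theta>)) ^ q * (a2 \<bullet> (x - \<theta>))) = F a1 a2 \<theta> ys"
    using ysF by (simp only: f m_def)
  show ?thesis
  proof (intro exI conjI allI)
    show "ev (du ys) 0 0 *\<^sub>R a1 + ev (dw ys) 0 0 *\<^sub>R a2 \<noteq> 0"
      by (rule indep2[OF assms(4) assms(5) v2nz])
    fix x
    have "grad ((quad_op Q ^^ (q div 2)) (\<lambda>x. (a1 \<bullet> (x - \<theta>)) ^ q * (a2 \<bullet> (x - \<theta>)))) x =
      ev (du ys) (a1 \<bullet> (x - \<theta>)) (a2 \<bullet> (x - \<theta>)) *\<^sub>R a1 + ev (dw ys) (a1 \<bullet> (x - \<theta>)) (a2 \<bullet> (x - \<theta>)) *\<^sub>R a2"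
      unfolding g by (rule grad_F)
    also have "\<dots> = ev (du ys) 0 0 *\<^sub>R a1 + ev (dw ys) 0 0 *\<^sub>R a2"
      by (simp only: c1[of "a1 \<bullet> (x - \<theta>)" "a2 \<bullet> (x - \<theta>)"] c2[of "a1 \<bullet> (x - \<theta>)" "a2 \<bullet> (x - \<theta>)"])
    finally show "grad ((quad_op Q ^^ (q div 2)) (\<lambda>x. (a1 \<bullet> (x - \<theta>)) ^ q * (a2 \<bullet> (x - \<theta>)))) x =
      ev (du ys) 0 0 *\<^sub>R a1 + ev (dw ys) 0 0 *\<^sub>R a2" .
  qed
qed

end
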